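(* For $k\in\mathbb{N}$ let $I_k=[2^{-(k+1)},2^{-k}]$ and $\phi_{I_k}$ as defined below. Then the closure of $\mathrm{span}\{\phi_{I_k}:k\in\mathbb{N}\}$ in $K([0,1])$ with respect to the Alexiewicz norm is contained in $\mathcal{J}\cup\{0\}$, where $\mathcal{J}$ is the set of Kurzweil integrable functions on $[0,1]$ which are not Lebesgue integrable. In particular, $\mathcal{J}$ is spaceable in $K([0,1])$.
   Context: Kurzweil integral means the Henstock–Kurzweil integral. $K([0,1])$ is the vector space of Kurzweil integrable functions on $[0,1]$ (modulo a.e. equality), with the Alexiewicz norm $\|f\|_A=\sup_{x\in[0,1]}|F(x)|$ where $F(x)=\int_0^x f$ (Kurzweil integral). Define $\Phi:[0,1]\to\mathbb{R}$ by $\Phi(x)=4x^2\sin\left(\frac{\pi}{4x^2}\right)$ for $x\in(0,1/2]$, $\Phi(x)=-4(1-x)^2\sin\left(\frac{\pi}{4(1-x)^2}\right)$ for $x\in(1/2,1)$, $\Phi(0)=\Phi(1)=0$. For $I=[a,b]\subset[0,1]$, $\Phi_I(x)=\Phi\left(\frac{x-a}{b-a}\right)$ for $x\in I$ and $0$ otherwise, and $\phi_I=\Phi_I'$, i.e. $\phi_I(x)=\frac{1}{b-a}\Phi'\left(\frac{x-a}{b-a}\right)$ for $x\in I$ and $0$ otherwise. A subset $S$ of a topological vector space $X$ is spaceable if $S\cup\{0\}$ contains a closed infinite-dimensional subspace of $X$. *)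

theory Defs
  imports "HOL-Analysis.Analysis"
begin

definition Phi :: "real \<Rightarrow> real" where
  "Phi x = (if 0 < x \<and> x \<le> 1/2 then 4 * x^2 * sin (pi / (4 * x^2))
            else if 1/2 < x \<and> x < 1 then - 4 * (1 - x)^2 * sin (pi / (4 * (1 - x)^2))
            else 0)"

definition phiI :: "real \<Rightarrow> real \<Rightarrow> real \<Rightarrow> real" where
  "phiI a b x = (if x \<in> {a..b} then deriv Phi ((x - a) / (b - a)) / (b - a) else 0)"

definition Ik_lo :: "nat \<Rightarrow> real" where "Ik_lo k = (1/2) ^ (k + 1)"
definition Ik_hi :: "nat \<Rightarrow> real" where "Ik_hi k = (1/2) ^ k"

definition alex_norm :: "(real \<Rightarrow> real) \<Rightarrow> real" where
  "alex_norm f = (SUP x\<in>{0..1}. \<bar>integral {0..x} f\<bar>)"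

definition KJ :: "(real \<Rightarrow> real) \<Rightarrow> bool" where
  "KJ f \<longleftrightarrow> f integrable_on {0..1} \<and> \<not> set_integrable lebesgue {0..1} f"

text \<open>The zero element of K([0,1]) (modulo a.e. equality).\<close>
definition K_zero :: "(real \<Rightarrow> real) \<Rightarrow> bool" where
  "K_zero f \<longleftrightarrow> (AE x in lebesgue. x \<in> {0..1} \<longrightarrow> f x = 0)"

text \<open>Spaceability in K([0,1]) of a set S (given as a predicate on representatives):
  there is a set V of representatives forming a linear subspace, closed in the Alexiewicz
  (semi)norm (hence also saturated under a.e. equality), infinite-dimensional modulo
  null functions, whose every element lies in S or is the zero of K([0,1]).\<close>
definition spaceable_K :: "((real \<Rightarrow> real) \<Rightarrow> bool) \<Rightarrow> bool" where
  "spaceable_K S \<longleftrightarrow> (\<exists>V :: (real \<Rightarrow> real) set.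
      (\<forall>f\<in>V. f integrable_on {0..1}) \<and>
      (\<lambda>x. 0) \<in> V \<and>
      (\<forall>f\<in>V. \<forall>g\<in>V. (\<lambda>x. f x + g x) \<in> V) \<and>
      (\<forall>f\<in>V. \<forall>c::real. (\<lambda>x. c * f x) \<in> V) \<and>
      (\<forall>f. f integrable_on {0..1} \<and> (\<forall>e>0. \<exists>g\<in>V. alex_norm (\<lambda>x. f x - g x) < e)
            \<longrightarrow> f \<in> V) \<and>
      (\<forall>n. \<exists>fs :: nat \<Rightarrow> real \<Rightarrow> real. (\<forall>i<n. fs i \<in> V) \<and>
            (\<forall>c :: nat \<Rightarrow> real. K_zero (\<lambda>x. \<Sum>i<n. c i * fs i x) \<longrightarrow> (\<forall>i<n. c i = 0))) \<and>
      (\<forall>f\<in>V. S f \<or> K_zero f))"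

end

theory Submission
  imports Defs
begin

definition h1 :: "real \<Rightarrow> real" where "h1 x = 4 * x^2 * sin (pi / (4 * x^2))"
definition d1 :: "real \<Rightarrow> real" where "d1 x = 8 * x * sin (pi / (4 * x^2)) - 2 * pi / x * cos (pi / (4 * x^2))"

lemma h1_deriv: "x \<noteq> 0 \<Longrightarrow> (h1 has_real_derivative d1 x) (at x)"
  unfolding h1_def d1_def
  apply (rule derivative_eq_intros refl | simp)+
  apply (simp add: field_simps power2_eq_square power3_eq_cube)
  apply (simp add: power4_eq_xxxx)
  done

lemma d1_half: "d1 (1/2) = 4*pi"
  by (simp add: d1_def power2_eq_square)

lemma Phi_left: "0 < x \<Longrightarrow> x \<le> 1/2 \<Longrightarrow> Phi x = h1 x"
  by (simp add: Phi_def h1_def)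
lemma Phi_right: "1/2 < x \<Longrightarrow> x < 1 \<Longrightarrow> Phi x = - h1 (1 - x)"
  by (simp add: Phi_def h1_def)
lemma Phi_out: "x \<le> 0 \<or> 1 \<le> x \<Longrightarrow> Phi x = 0"
  by (auto simp add: Phi_def)

lemma Phi_bound0: "\<bar>Phi x\<bar> \<le> 4 * x^2"
proof -
  have s: "\<bar>sin y\<bar> \<le> 1" for y :: real by (rule abs_sin_le_one)
  show ?thesis
  proof (cases "0 < x \<and> x \<le> 1/2")
    case True
    then show ?thesis using s[of "pi / (4 * x^2)"]
      by (auto simp: Phi_def abs_mult intro!: mult_left_le[where a="\<bar>sin _\<bar>", simplified])
  next
    case F: False
    show ?thesis
    proof (cases "1/2 < x \<and> x < 1")
      case True
      have "\<bar>Phi x\<bar> = 4 * (1-x)^2 * \<bar>sin (pi / (4 * (1 - x)^2))\<bar>"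
        using True F by (simp add: Phi_def abs_mult)
      also have "\<dots> \<le> 4 * (1-x)^2" using s[of "pi / (4 * (1 - x)^2)"]
        by (simp add: mult_left_le)
      also have "\<dots> \<le> 4 * x^2" using True by (intro mult_left_mono power_mono) auto
      finally show ?thesis .
    next
      case False
      then have "x \<le> 0 \<or> 1 \<le> x" using F by auto
      then show ?thesis using Phi_out by simp
    qed
  qed
qed

lemma Phi_half: "Phi (1/2) = 0"
  by (simp add: Phi_def power2_eq_square)

lemma Phi_sym: "Phi (1 - x) = - Phi x"
proof (cases "x = 1/2")
  case True
  then have "1 - x = 1/2" by simp
  then show ?thesis using True Phi_half by (metis neg_0_equal_iff_equal)
next
  case False then have "x < 1/2 \<or> x > 1/2" by auto
  then show ?thesis by (auto simp: Phi_def)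
qed

lemma Phi_bound1: "\<bar>Phi x\<bar> \<le> 4 * (1 - x)^2"
  using Phi_bound0[of "1 - x"] Phi_sym[of x] by simp

lemma Phi_bound: "\<bar>Phi x\<bar> \<le> 1"
proof (cases "x \<le> 1/2")
  case True
  show ?thesis
  proof (cases "x \<le> 0")
    case True then show ?thesis using Phi_out by simp
  next
    case False
    have "x^2 \<le> (1/2)^2" using False \<open>x \<le> 1/2\<close> by (intro power_mono) auto
    moreover have "(1/2::real)^2 = 1/4" by (simp add: power2_eq_square)
    ultimately show ?thesis using Phi_bound0[of x] by linarith
  qed
next
  case False
  show ?thesis
  proof (cases "x \<ge> 1")
    case True then show ?thesis using Phi_out by simp
  next
    case F: False
    have "(1-x)^2 \<le> (1/2)^2" using False F by (intro power_mono) auto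
    moreover have "(1/2::real)^2 = 1/4" by (simp add: power2_eq_square)
    ultimately show ?thesis using Phi_bound1[of x] by linarith
  qed
qed

lemma quad_deriv:
  fixes g :: "real \<Rightarrow> real"
  assumes "g x = 0" "\<And>h. \<bar>g (x + h)\<bar> \<le> 4 * h^2"
  shows "(g has_real_derivative 0) (at x)"
  unfolding DERIV_def
proof (rule Lim_null_comparison)
  show "\<forall>\<^sub>F h in at 0. norm ((g (x + h) - g x) / h) \<le> 4 * \<bar>h\<bar>"
  proof (rule always_eventually, rule allI)
    fix h :: real
    show "norm ((g (x + h) - g x) / h) \<le> 4 * \<bar>h\<bar>"
    proof (cases "h = 0")
      case False
      have "norm ((g (x + h) - g x) / h) = \<bar>g (x + h)\<bar> / \<bar>h\<bar>" using assms(1) by (simp add: abs_divide)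
      also have "\<dots> \<le> 4 * h^2 / \<bar>h\<bar>" using assms(2)[of h] False by (simp add: divide_right_mono)
      also have "\<dots> = 4 * \<bar>h\<bar>" using False by (simp add: power2_eq_square field_simps abs_mult_self_eq)
      finally show ?thesis .
    qed simp
  qed
  show "((\<lambda>h. 4 * \<bar>h\<bar>) \<longlongrightarrow> 0) (at (0::real))"
    by (rule tendsto_eq_intros refl | simp)+
qed

lemma h2_deriv: "x \<noteq> 1 \<Longrightarrow> ((\<lambda>y. - h1 (1 - y)) has_real_derivative d1 (1 - x)) (at x)"
proof -
  assume x: "x \<noteq> 1"
  have A: "((\<lambda>y. 1 - y) has_real_derivative -1) (at x)"
    using DERIV_diff[OF DERIV_const[of 1] DERIV_ident] by simp
  have B: "(h1 has_real_derivative d1 (1 - x)) (at (1 - x))" using x by (intro h1_deriv) simp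
  have "((\<lambda>y. h1 (1 - y)) has_real_derivative d1 (1 - x) * -1) (at x)"
    by (rule DERIV_chain2[OF B A])
  from DERIV_minus[OF this] show ?thesis by simp
qed

lemma Phi_deriv: "\<exists>D. (Phi has_real_derivative D) (at x)"
proof -
  consider "x < 0" | "x = 0" | "0 < x \<and> x < 1/2" | "x = 1/2" | "1/2 < x \<and> x < 1" | "x = 1" | "x > 1"
    by linarith
  then show ?thesis
  proof cases
    case 1
    have "((\<lambda>x. 0) has_real_derivative 0) (at x)" by simp
    then have "(Phi has_real_derivative 0) (at x)"
      by (rule has_field_derivative_transform_within_open[where S="{..<0}"]) (use 1 Phi_out in auto)
    then show ?thesis by blast
  next
    case 2
    have "(Phi has_real_derivative 0) (at 0)"
      by (rule quad_deriv) (use Phi_out Phi_bound0 in auto)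
    then show ?thesis using 2 by blast
  next
    case 3
    have "(h1 has_real_derivative d1 x) (at x)" using 3 by (intro h1_deriv) auto
    then have "(Phi has_real_derivative d1 x) (at x)"
      by (rule has_field_derivative_transform_within_open[where S="{0<..<1/2}"]) (use 3 Phi_left in auto)
    then show ?thesis by blast
  next
    case 4
    have L: "((\<lambda>y. (h1 y - h1 (1/2)) / (y - 1/2)) \<longlongrightarrow> 4*pi) (at (1/2))"
      using h1_deriv[of "1/2"] d1_half by (simp add: has_field_derivative_iff)
    have "((\<lambda>y. - h1 (1 - y)) has_real_derivative d1 (1 - 1/2)) (at (1/2))"
      by (rule h2_deriv) simp
    then have R: "((\<lambda>y. (- h1 (1 - y) - (- h1 (1/2))) / (y - 1/2)) \<longlongrightarrow> 4*pi) (at (1/2))"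
      using d1_half by (simp add: has_field_derivative_iff)
    have h1h: "h1 (1/2) = 0" using Phi_half Phi_left[of "1/2"] by simp
    have "((\<lambda>y. (Phi y - Phi (1/2)) / (y - 1/2)) \<longlongrightarrow> 4*pi) (at (1/2))"
    proof (rule filterlim_split_at)
      show "((\<lambda>y. (Phi y - Phi (1/2)) / (y - 1/2)) \<longlongrightarrow> 4*pi) (at_left (1/2))"
      proof (rule Lim_transform_eventually)
        show "((\<lambda>y. (h1 y - h1 (1/2)) / (y - 1/2)) \<longlongrightarrow> 4*pi) (at_left (1/2))"
          by (rule tendsto_mono[OF at_le L]) simp
        show "\<forall>\<^sub>F y in at_left (1/2). (h1 y - h1 (1/2)) / (y - 1/2) = (Phi y - Phi (1/2)) / (y - 1/2)"
          using eventually_at_left_real[of 0 "1/2::real", OF zero_less_divide_iff[THEN iffD2], simplified]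
          by eventually_elim (auto simp: Phi_left Phi_half h1h)
      qed
      show "((\<lambda>y. (Phi y - Phi (1/2)) / (y - 1/2)) \<longlongrightarrow> 4*pi) (at_right (1/2))"
      proof (rule Lim_transform_eventually)
        show "((\<lambda>y. (- h1 (1 - y) - (- h1 (1/2))) / (y - 1/2)) \<longlongrightarrow> 4*pi) (at_right (1/2))"
          by (rule tendsto_mono[OF at_le R]) simp
        show "\<forall>\<^sub>F y in at_right (1/2). (- h1 (1 - y) - (- h1 (1/2))) / (y - 1/2) = (Phi y - Phi (1/2)) / (y - 1/2)"
          using eventually_at_right_real[of "1/2" "1::real", simplified]
          by eventually_elim (auto simp: Phi_right Phi_half h1h)
      qed
    qed
    then have D4: "(Phi has_real_derivative 4*pi) (at (1/2))" by (simp only: has_field_derivative_iff)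
    have x12: "x = 1/2" using 4 by simp
    show ?thesis by (rule ssubst[OF x12]) (rule exI, rule D4)
  next
    case 5
    have "((\<lambda>y. - h1 (1 - y)) has_real_derivative d1 (1 - x)) (at x)"
      using 5 by (intro h2_deriv) simp
    then have "(Phi has_real_derivative d1 (1 - x)) (at x)"
      by (rule has_field_derivative_transform_within_open[where S="{1/2<..<1}"]) (use 5 Phi_right in auto)
    then show ?thesis by blast
  next
    case 6
    have "(Phi has_real_derivative 0) (at 1)"
    proof (rule quad_deriv)
      show "Phi 1 = 0" using Phi_out by simp
      fix h :: real show "\<bar>Phi (1 + h)\<bar> \<le> 4 * h^2" using Phi_bound1[of "1+h"] by simp
    qed
    then show ?thesis using 6 by blast
  next
    case 7
    have "((\<lambda>x. 0) has_real_derivative 0) (at x)" by simp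
    then have "(Phi has_real_derivative 0) (at x)"
      by (rule has_field_derivative_transform_within_open[where S="{1<..}"]) (use 7 Phi_out in auto)
    then show ?thesis by blast
  qed
qed

lemma Phi_has_deriv: "(Phi has_real_derivative deriv Phi x) (at x)"
proof -
  obtain D where D: "(Phi has_real_derivative D) (at x)" using Phi_deriv by blast
  then have "deriv Phi x = D" by (rule DERIV_imp_deriv)
  then show ?thesis using D by simp
qed

lemma deriv_Phi_out: "x < 0 \<or> 1 < x \<Longrightarrow> deriv Phi x = 0"
proof -
  assume a: "x < 0 \<or> 1 < x"
  have "((\<lambda>x. 0) has_real_derivative 0) (at x)" by simp
  then have "(Phi has_real_derivative 0) (at x)"
    by (rule has_field_derivative_transform_within_open[where S="{..<0} \<union> {1<..}"]) (use a Phi_out in auto)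
  then show ?thesis by (rule DERIV_imp_deriv)
qed

definition PhiI :: "real \<Rightarrow> real \<Rightarrow> real \<Rightarrow> real" where
  "PhiI a b x = Phi ((x - a) / (b - a))"

lemma phiI_eq: "a < b \<Longrightarrow> phiI a b x = deriv Phi ((x - a) / (b - a)) / (b - a)"
proof -
  assume ab: "a < b"
  show ?thesis
  proof (cases "x \<in> {a..b}")
    case False
    then have "x < a \<or> b < x" by auto
    then have "(x - a) / (b - a) < 0 \<or> 1 < (x - a) / (b - a)" using ab
      by (auto simp: divide_less_0_iff less_divide_eq)
    then show ?thesis using False by (simp add: phiI_def deriv_Phi_out)
  qed (simp add: phiI_def)
qed

lemma PhiI_deriv: "a < b \<Longrightarrow> (PhiI a b has_real_derivative phiI a b x) (at x)"
proof -
  assume ab: "a < b"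
  have A: "((\<lambda>y. (y - a) / (b - a)) has_real_derivative 1 / (b - a)) (at x)"
  proof -
    have "((\<lambda>y. y - a) has_real_derivative 1 - 0) (at x)" by (intro DERIV_diff DERIV_ident DERIV_const)
    from DERIV_cdivide[OF this, of "b - a"] show ?thesis by simp
  qed
  have "((\<lambda>y. Phi ((y - a) / (b - a))) has_real_derivative deriv Phi ((x - a) / (b - a)) * (1 / (b - a))) (at x)"
    by (rule DERIV_chain2[OF Phi_has_deriv A])
  then show ?thesis using ab by (simp add: phiI_eq PhiI_def[abs_def])
qed

lemma phiI_integral:
  assumes "a < b" "0 \<le> a" "0 \<le> x"
  shows "(phiI a b has_integral PhiI a b x) {0..x}"
proof -
  have "(phiI a b has_integral (PhiI a b x - PhiI a b 0)) {0..x}"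
  proof (rule fundamental_theorem_of_calculus)
    show "0 \<le> x" by fact
    fix y assume "y \<in> {0..x}"
    show "(PhiI a b has_vector_derivative phiI a b y) (at y within {0..x})"
      using PhiI_deriv[OF assms(1), of y]
      by (simp add: has_real_derivative_iff_has_vector_derivative[symmetric] has_field_derivative_at_within)
  qed
  moreover have "PhiI a b 0 = 0" unfolding PhiI_def
    using assms by (intro Phi_out) (auto simp: divide_le_0_iff)
  ultimately show ?thesis by simp
qed

lemma lo_pos: "0 < Ik_lo k" by (simp add: Ik_lo_def)
lemma lo_hi: "Ik_lo k < Ik_hi k" by (simp add: Ik_lo_def Ik_hi_def)
lemma hi_le1: "Ik_hi k \<le> 1" by (simp add: Ik_hi_def power_le_one)
lemma hi_le_lo: "j < k \<Longrightarrow> Ik_hi k \<le> Ik_lo j"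
  unfolding Ik_lo_def Ik_hi_def by (rule power_decreasing) auto

lemma PHI_zero:
  assumes "x \<in> {Ik_lo j..Ik_hi j}" "k \<noteq> j"
  shows "PhiI (Ik_lo k) (Ik_hi k) x = 0"
  unfolding PhiI_def
proof (rule Phi_out)
  have d: "0 < Ik_hi k - Ik_lo k" using lo_hi[of k] by simp
  show "(x - Ik_lo k) / (Ik_hi k - Ik_lo k) \<le> 0 \<or> 1 \<le> (x - Ik_lo k) / (Ik_hi k - Ik_lo k)"
  proof (cases "k < j")
    case True
    then have "x \<le> Ik_lo k" using hi_le_lo[OF True] assms(1) by auto
    then show ?thesis using d by (simp add: divide_le_0_iff)
  next
    case False
    then have "j < k" using assms(2) by simp
    then have "Ik_hi k \<le> x" using hi_le_lo[of j k] assms(1) by auto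
    then show ?thesis using d by (simp add: le_divide_eq)
  qed
qed

lemma sum_at:
  assumes "x \<in> {Ik_lo j..Ik_hi j}"
  shows "(\<Sum>k<n. c k * PhiI (Ik_lo k) (Ik_hi k) x) = (if j < n then c j else 0) * PhiI (Ik_lo j) (Ik_hi j) x"
proof -
  have "(\<Sum>k<n. c k * PhiI (Ik_lo k) (Ik_hi k) x) = (\<Sum>k<n. if k = j then c j * PhiI (Ik_lo j) (Ik_hi j) x else 0)"
    by (rule sum.cong) (auto simp: PHI_zero[OF assms])
  then show ?thesis by (simp add: sum.delta)
qed

lemma int_sum:
  assumes "0 \<le> x"
  shows "((\<lambda>y. \<Sum>k<n. c k * phiI (Ik_lo k) (Ik_hi k) y) has_integral (\<Sum>k<n. c k * PhiI (Ik_lo k) (Ik_hi k) x)) {0..x}"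
  by (rule has_integral_sum) (auto intro!: has_integral_mult_right phiI_integral lo_hi assms less_imp_le[OF lo_pos])

lemma int_sum_integrable: "(\<lambda>y. \<Sum>k<n. c k * phiI (Ik_lo k) (Ik_hi k) y) integrable_on {0..x}"
proof (cases "0 \<le> x")
  case True then show ?thesis using int_sum by blast
next
  case False then show ?thesis by (simp add: integrable_on_empty)
qed

lemma alex_bdd:
  fixes h :: "real \<Rightarrow> real"
  assumes "h integrable_on {0..1}"
  shows "bdd_above ((\<lambda>x. \<bar>integral {0..x} h\<bar>) ` {0..1})"
proof -
  have "continuous_on {0..1} (\<lambda>x. \<bar>integral {0..x} h\<bar>)"
    using indefinite_integral_continuous_1[OF assms] by (intro continuous_intros)
  then have "compact ((\<lambda>x. \<bar>integral {0..x} h\<bar>) ` {0..1})"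
    by (rule compact_continuous_image) simp
  then show ?thesis by (intro bounded_imp_bdd_above compact_imp_bounded)
qed

lemma alex_ge:
  fixes h :: "real \<Rightarrow> real"
  assumes "h integrable_on {0..1}" "x \<in> {0..1}"
  shows "\<bar>integral {0..x} h\<bar> \<le> alex_norm h"
  unfolding alex_norm_def by (rule cSUP_upper[OF assms(2) alex_bdd[OF assms(1)]])

lemma alex_le:
  fixes h :: "real \<Rightarrow> real"
  assumes "\<And>x. x \<in> {0..1} \<Longrightarrow> \<bar>integral {0..x} h\<bar> \<le> K"
  shows "alex_norm h \<le> K"
  unfolding alex_norm_def by (rule cSUP_least) (use assms in auto)

lemma alex_nonneg: "(h::real\<Rightarrow>real) integrable_on {0..1} \<Longrightarrow> 0 \<le> alex_norm h"
  using alex_ge[of h 0] by (meson abs_ge_zero atLeastAtMost_iff order_trans zero_le_one order_refl)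

lemma alex_triangle:
  fixes f g :: "real \<Rightarrow> real"
  assumes "f integrable_on {0..1}" "g integrable_on {0..1}"
  shows "alex_norm (\<lambda>x. f x + g x) \<le> alex_norm f + alex_norm g"
proof (rule alex_le)
  fix x :: real assume x: "x \<in> {0..1}"
  have fi: "f integrable_on {0..x}" "g integrable_on {0..x}"
    using assms x by (auto intro: integrable_on_subinterval)
  have "\<bar>integral {0..x} (\<lambda>x. f x + g x)\<bar> = \<bar>integral {0..x} f + integral {0..x} g\<bar>"
    using fi by (simp add: integral_add)
  also have "\<dots> \<le> alex_norm f + alex_norm g"
    using alex_ge[OF assms(1) x] alex_ge[OF assms(2) x] by linarith
  finally show "\<bar>integral {0..x} (\<lambda>x. f x + g x)\<bar> \<le> alex_norm f + alex_norm g" .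
qed

lemma alex_scale:
  fixes f :: "real \<Rightarrow> real"
  assumes "f integrable_on {0..1}"
  shows "alex_norm (\<lambda>x. c * f x) \<le> \<bar>c\<bar> * alex_norm f"
proof (rule alex_le)
  fix x :: real assume x: "x \<in> {0..1}"
  have "\<bar>integral {0..x} (\<lambda>x. c * f x)\<bar> = \<bar>c\<bar> * \<bar>integral {0..x} f\<bar>"
    by (simp add: abs_mult)
  also have "\<dots> \<le> \<bar>c\<bar> * alex_norm f"
    using alex_ge[OF assms x] by (simp add: mult_left_mono)
  finally show "\<bar>integral {0..x} (\<lambda>x. c * f x)\<bar> \<le> \<bar>c\<bar> * alex_norm f" .
qed


definition vpt :: "nat \<Rightarrow> real" where "vpt n = sqrt (1 / (2 * (2 * real n + 3)))"

lemma vpt_pos: "0 < vpt n" by (simp add: vpt_def)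
lemma vpt_le: "vpt n \<le> 1/2"
proof -
  have "1 / (2 * (2 * real n + 3)) \<le> (1/2)^2" by (simp add: power2_eq_square field_simps)
  then have "vpt n \<le> sqrt ((1/2)^2)" unfolding vpt_def by (rule real_sqrt_le_mono)
  then show ?thesis by simp
qed
lemma vpt_dec: "vpt (Suc n) \<le> vpt n"
  unfolding vpt_def by (rule real_sqrt_le_mono) (simp add: field_simps)

lemma vpt_sq: "4 * (vpt n)^2 = 2 / (2 * real n + 3)"
  unfolding vpt_def by (simp add: field_simps)

lemma sin_half_odd: "sin (pi * (2 * real n + 3) / 2) = (-1) ^ (n + 1)"
proof -
  have e: "pi * (2 * real n + 3) / 2 = real (n + 1) * pi + pi / 2" by (simp add: field_simps)
  have "sin (real (n + 1) * pi + pi / 2) = (-1)^(n+1)"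
    unfolding sin_add sin_npi cos_npi cos_pi_half sin_pi_half by simp
  then show ?thesis by (simp only: e)
qed

lemma Phi_vpt: "Phi (vpt n) = 2 / (2 * real n + 3) * (-1) ^ (n + 1)"
proof -
  have "Phi (vpt n) = 4 * (vpt n)^2 * sin (pi / (4 * (vpt n)^2))"
    using vpt_pos[of n] vpt_le[of n] by (simp add: Phi_def)
  also have "pi / (4 * (vpt n)^2) = pi * (2 * real n + 3) / 2" by (simp add: vpt_sq)
  finally show ?thesis using sin_half_odd vpt_sq by simp
qed

lemma Phi_vpt_diff: "1 / (real n + 2) \<le> \<bar>Phi (vpt n) - Phi (vpt (Suc n))\<bar>"
proof -
  have "Phi (vpt n) - Phi (vpt (Suc n)) = (-1) ^ (n + 1) * (2 / (2 * real n + 3) + 2 / (2 * real n + 5))"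
    by (simp add: Phi_vpt field_simps)
  then have "\<bar>Phi (vpt n) - Phi (vpt (Suc n))\<bar> = 2 / (2 * real n + 3) + 2 / (2 * real n + 5)"
    by (simp add: abs_mult)
  moreover have "1 / (real n + 2) \<le> 2 / (2 * real n + 3)" by (simp add: field_simps)
  moreover have "0 \<le> 2 / (2 * real n + 5)" by simp
  ultimately show ?thesis by linarith
qed

lemma harmonic_unbounded: "\<not> (\<forall>N. (\<Sum>n<N. 1 / (real n + 2)) \<le> K)"
proof
  assume "\<forall>N. (\<Sum>n<N. 1 / (real n + 2)) \<le> K"
  then have "summable (\<lambda>n. 1 / (real n + 2))"
    by (intro summableI_nonneg_bounded[where x=K]) auto
  then have "summable (\<lambda>n. inverse (real (Suc (Suc n))))"
    by (simp add: inverse_eq_divide add.commute)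
  then have "summable (\<lambda>n. inverse (real (Suc n)) :: real)"
    using summable_Suc_iff[of "\<lambda>n. inverse (real (Suc n)) :: real"] by simp
  then have "summable (\<lambda>n. inverse (real n) :: real)"
    using summable_Suc_iff[of "\<lambda>n. inverse (real n) :: real"] by simp
  then show False using not_summable_harmonic by blast
qed

lemma var_zero:
  fixes f :: "real \<Rightarrow> real"
  assumes fa: "f absolutely_integrable_on {0..1}" and ab: "a < b" "0 \<le> a" "b \<le> 1"
    and F: "\<And>x. x \<in> {a..b} \<Longrightarrow> integral {0..x} f = d * PhiI a b x"
  shows "d = 0"
proof (rule ccontr)
  assume d: "d \<noteq> 0"
  define x where "x n = a + (b - a) * vpt n" for n
  define F where "F y = integral {0..y} f" for y
  have fi: "f integrable_on {0..1}" and afi: "(\<lambda>t. \<bar>f t\<bar>) integrable_on {0..1}"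
    using fa by (auto simp: absolutely_integrable_on_def real_norm_def)
  have xab: "x n \<in> {a..b}" for n
  proof -
    have "(b - a) * vpt n \<le> (b - a) * 1" using vpt_le[of n] ab by (intro mult_left_mono) auto
    then have "(b - a) * vpt n \<le> b - a" by simp
    moreover have "0 \<le> (b - a) * vpt n" using vpt_pos[of n] ab by simp
    ultimately show ?thesis unfolding x_def atLeastAtMost_iff by (intro conjI) linarith+
  qed
  have xdec: "x (Suc n) \<le> x n" for n using vpt_dec[of n] ab by (simp add: x_def)
  have xdec': "x m \<le> x n" if "n \<le> m" for n m
    using that by (induction m rule: dec_induct) (auto intro: order_trans[OF xdec])
  have x01: "x n \<in> {0..1}" for n using xab[of n] ab by auto
  have Px: "PhiI a b (x n) = Phi (vpt n)" for n using ab by (simp add: PhiI_def x_def)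
  have fs: "f integrable_on {u..v}" if "0 \<le> u" "v \<le> 1" for u v
    by (rule integrable_on_subinterval[OF fi]) (use that in auto)
  have afs: "(\<lambda>t. \<bar>f t\<bar>) integrable_on {u..v}" if "0 \<le> u" "v \<le> 1" for u v
    by (rule integrable_on_subinterval[OF afi]) (use that in auto)
  have xl: "0 \<le> x n" "x n \<le> 1" for n using x01[of n] by auto
  have step: "\<bar>F (x n) - F (x (Suc n))\<bar> \<le> integral {x (Suc n)..x n} (\<lambda>t. \<bar>f t\<bar>)" for n
  proof -
    have "F (x (Suc n)) + integral {x (Suc n)..x n} f = F (x n)"
      unfolding F_def
      by (rule Henstock_Kurzweil_Integration.integral_combine) (use x01 xdec in \<open>auto intro: fs xl\<close>)
    then have "\<bar>F (x n) - F (x (Suc n))\<bar> = norm (integral {x (Suc n)..x n} f)" by auto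
    also have "\<dots> \<le> integral {x (Suc n)..x n} (\<lambda>t. \<bar>f t\<bar>)"
      by (rule integral_norm_bound_integral)
        (use x01 in \<open>auto intro: fs afs xl\<close>)
    finally show ?thesis .
  qed
  have claim: "(\<Sum>n<N. \<bar>F (x n) - F (x (Suc n))\<bar>) \<le> integral {x N..x 0} (\<lambda>t. \<bar>f t\<bar>)" for N
  proof (induction N)
    case 0
    have "0 \<le> integral {x 0..x 0} (\<lambda>t. \<bar>f t\<bar>)"
      by (rule integral_nonneg[OF afs[OF xl(1)[of 0] xl(2)[of 0]]]) simp
    then show ?case by simp
  next
    case (Suc N)
    have "integral {x (Suc N)..x N} (\<lambda>t. \<bar>f t\<bar>) + integral {x N..x 0} (\<lambda>t. \<bar>f t\<bar>)
        = integral {x (Suc N)..x 0} (\<lambda>t. \<bar>f t\<bar>)"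
      by (rule Henstock_Kurzweil_Integration.integral_combine) (use x01 xdec xdec'[of 0 N] in \<open>auto intro: afs xl\<close>)
    then show ?case using Suc step[of N] by simp
  qed
  have bound: "integral {x N..x 0} (\<lambda>t. \<bar>f t\<bar>) \<le> integral {0..1} (\<lambda>t. \<bar>f t\<bar>)" for N
    by (rule integral_subset_le) (use x01 in \<open>auto intro: afs xl afi\<close>)
  have "(\<Sum>n<N. 1 / (real n + 2)) \<le> integral {0..1} (\<lambda>t. \<bar>f t\<bar>) / \<bar>d\<bar>" for N
  proof -
    have "\<bar>d\<bar> * (\<Sum>n<N. 1 / (real n + 2)) \<le> \<bar>d\<bar> * (\<Sum>n<N. \<bar>Phi (vpt n) - Phi (vpt (Suc n))\<bar>)"
      by (intro mult_left_mono sum_mono Phi_vpt_diff) auto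
    also have "\<dots> = (\<Sum>n<N. \<bar>F (x n) - F (x (Suc n))\<bar>)"
      unfolding sum_distrib_left
      by (rule sum.cong) (auto simp: F_def F[OF xab] Px abs_mult[symmetric] right_diff_distrib)
    also have "\<dots> \<le> integral {0..1} (\<lambda>t. \<bar>f t\<bar>)" using claim[of N] bound[of N] by linarith
    finally show ?thesis using d by (simp add: field_simps)
  qed
  then show False using harmonic_unbounded by blast
qed


lemma kzero_int:
  fixes s :: "real \<Rightarrow> real"
  assumes "K_zero s" "x \<in> {0..1}"
  shows "(s has_integral 0) {0..x}"
proof -
  obtain N where N: "\<And>y. y \<in> space lebesgue - N \<Longrightarrow> (y \<in> {0..1} \<longrightarrow> s y = 0)" "N \<in> null_sets lebesgue"
    using assms(1) unfolding K_zero_def by (rule AE_E3) blast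
  have neg: "negligible N" using N(2) by (simp add: negligible_iff_null_sets)
  have z: "((\<lambda>y. 0::real) has_integral 0) {0..x}" by simp
  show ?thesis
  proof (rule has_integral_spike[OF neg _ z])
    fix y assume "y \<in> {0..x} - N" then show "s y = 0" using N(1)[of y] assms(2) by auto
  qed
qed

lemma zero_ae:
  fixes f :: "real \<Rightarrow> real"
  assumes fi: "f integrable_on {0..1}" and F0: "\<And>x. x \<in> {0..1} \<Longrightarrow> integral {0..x} f = 0"
  shows "K_zero f"
proof -
  define g where "g x = (if x \<in> {0..1} then f x else 0)" for x
  have gU: "g integrable_on UNIV" unfolding g_def using fi integrable_restrict_UNIV by blast
  have gi: "g integrable_on cbox a b" for a b :: real
    by (rule integrable_on_subcbox[OF gU]) auto
  obtain N where N: "negligible N"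
    "\<And>x e. \<lbrakk>x \<notin> N; 0 < e\<rbrakk> \<Longrightarrow> \<exists>d>0. \<forall>h. 0 < h \<and> h < d \<longrightarrow>
        norm(integral (cbox x (x + h *\<^sub>R One)) g /\<^sub>R h ^ DIM(real) - g x) < e"
    using integrable_ccontinuous_explicit[of g] gi by blast
  have fz: "f x = 0" if x: "x \<in> {0..<1}" "x \<notin> N" for x
  proof (rule ccontr)
    assume nz: "f x \<noteq> 0"
    then obtain d where d: "d > 0" "\<forall>h. 0 < h \<and> h < d \<longrightarrow>
        norm(integral (cbox x (x + h *\<^sub>R One)) g /\<^sub>R h ^ DIM(real) - g x) < \<bar>f x\<bar>"
      using N(2)[OF x(2), of "\<bar>f x\<bar>"] by auto
    define h where "h = min (d/2) (1 - x)"
    have h: "0 < h" "h < d" "x + h \<le> 1" using d x by (auto simp: h_def)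
    have "integral {x..x+h} g = integral {x..x+h} f"
      by (rule integral_cong) (use x h in \<open>auto simp: g_def\<close>)
    also have "\<dots> = integral {0..x+h} f - integral {0..x} f"
      using Henstock_Kurzweil_Integration.integral_combine[of 0 x "x+h" f] x h
        integrable_on_subinterval[OF fi, of 0 "x+h"] by auto
    also have "\<dots> = 0" using F0[of x] F0[of "x+h"] x h by auto
    finally have "integral {x..x+h} g = 0" .
    moreover have "g x = f x" using x by (auto simp: g_def)
    ultimately have "norm (0 - f x) < \<bar>f x\<bar>"
      using d(2)[rule_format, of h] h by (simp add: cbox_interval)
    then show False by simp
  qed
  have "negligible (insert 1 N)" using N(1) by simp
  then have nul: "insert 1 N \<in> null_sets lebesgue" by (simp add: negligible_iff_null_sets)
  show ?thesis unfolding K_zero_def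
    by (rule AE_I'[OF nul]) (use fz in force)
qed


lemma sum_integrable01: "(\<lambda>y. \<Sum>k<n. c k * phiI (Ik_lo k) (Ik_hi k) y) integrable_on {0..1}"
  by (rule int_sum_integrable)

lemma approx_pt:
  fixes f :: "real \<Rightarrow> real"
  assumes fi: "f integrable_on {0..1}"
    and a: "alex_norm (\<lambda>x. f x - (\<Sum>k<n. c k * phiI (Ik_lo k) (Ik_hi k) x)) < e"
    and x: "x \<in> {0..1}"
  shows "\<bar>integral {0..x} f - (\<Sum>k<n. c k * PhiI (Ik_lo k) (Ik_hi k) x)\<bar> < e"
proof -
  let ?s = "\<lambda>y. \<Sum>k<n. c k * phiI (Ik_lo k) (Ik_hi k) y"
  have d: "(\<lambda>x. f x - ?s x) integrable_on {0..1}" using fi sum_integrable01 by (rule integrable_diff)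
  have fx: "f integrable_on {0..x}" using fi x by (auto intro: integrable_on_subinterval)
  have "integral {0..x} (\<lambda>x. f x - ?s x) = integral {0..x} f - integral {0..x} ?s"
    using fx int_sum_integrable by (rule integral_diff)
  also have "integral {0..x} ?s = (\<Sum>k<n. c k * PhiI (Ik_lo k) (Ik_hi k) x)"
    using int_sum[of x, where n=n and c=c] x by (auto intro: integral_unique)
  finally show ?thesis using alex_ge[OF d x] a by linarith
qed

lemma approx_coef:
  fixes f :: "real \<Rightarrow> real"
  assumes fi: "f integrable_on {0..1}"
    and ap: "\<forall>e>0. \<exists>n (c :: nat \<Rightarrow> real).
                 alex_norm (\<lambda>x. f x - (\<Sum>k<n. c k * phiI (Ik_lo k) (Ik_hi k) x)) < e"
  shows "\<exists>d. \<forall>x\<in>{Ik_lo j..Ik_hi j}. integral {0..x} f = d * PhiI (Ik_lo j) (Ik_hi j) x"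
proof -
  let ?P = "PhiI (Ik_lo j) (Ik_hi j)"
  define t where "t = Ik_lo j + (Ik_hi j - Ik_lo j) * vpt 0"
  have lh: "Ik_lo j < Ik_hi j" by (rule lo_hi)
  have Pt: "?P t = -2/3" using lh by (simp add: PhiI_def t_def Phi_vpt)
  have tI: "t \<in> {Ik_lo j..Ik_hi j}"
  proof -
    have "(Ik_hi j - Ik_lo j) * vpt 0 \<le> (Ik_hi j - Ik_lo j) * 1" using vpt_le[of 0] lh by (intro mult_left_mono) auto
    then have "(Ik_hi j - Ik_lo j) * vpt 0 \<le> Ik_hi j - Ik_lo j" by simp
    moreover have "0 \<le> (Ik_hi j - Ik_lo j) * vpt 0" using vpt_pos[of 0] lh by simp
    ultimately show ?thesis unfolding t_def atLeastAtMost_iff by (intro conjI) linarith+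
  qed
  have I01: "y \<in> {0..1}" if "y \<in> {Ik_lo j..Ik_hi j}" for y
    using that lo_pos[of j] hi_le1[of j] by auto
  define d where "d = integral {0..t} f / (-2/3)"
  have "integral {0..x} f = d * ?P x" if x: "x \<in> {Ik_lo j..Ik_hi j}" for x
  proof (rule ccontr)
    assume ne: "integral {0..x} f \<noteq> d * ?P x"
    define e where "e = \<bar>integral {0..x} f - d * ?P x\<bar> / 3"
    have e: "e > 0" using ne by (simp add: e_def)
    obtain n c where nc: "alex_norm (\<lambda>x. f x - (\<Sum>k<n. c k * phiI (Ik_lo k) (Ik_hi k) x)) < e"
      using ap e by blast
    define cj where "cj = (if j < n then c j else 0)"
    have ax: "\<bar>integral {0..x} f - cj * ?P x\<bar> < e"
      using approx_pt[OF fi nc I01[OF x]] sum_at[OF x, where n=n and c=c] by (simp add: cj_def)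
    have at: "\<bar>integral {0..t} f - cj * (-2/3)\<bar> < e"
      using approx_pt[OF fi nc I01[OF tI]] sum_at[OF tI, where n=n and c=c] Pt by (simp add: cj_def)
    have "d - cj = (integral {0..t} f - cj * (-2/3)) / (-2/3)" by (simp add: d_def field_simps)
    then have dc: "\<bar>d - cj\<bar> < 3/2 * e" using at by (simp add: abs_divide)
    have "\<bar>(d - cj) * ?P x\<bar> \<le> \<bar>d - cj\<bar>"
      using Phi_bound by (simp add: abs_mult PhiI_def mult_left_le)
    moreover have "integral {0..x} f - d * ?P x = (integral {0..x} f - cj * ?P x) - (d - cj) * ?P x"
      by (simp add: algebra_simps)
    then have "\<bar>integral {0..x} f - d * ?P x\<bar> \<le> \<bar>integral {0..x} f - cj * ?P x\<bar> + \<bar>(d - cj) * ?P x\<bar>"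
      by (metis abs_triangle_ineq4)
    ultimately have "\<bar>integral {0..x} f - d * ?P x\<bar> < 3 * e"
      using ax dc by linarith
    then show False by (simp add: e_def)
  qed
  then show ?thesis by blast
qed

lemma cover: "x \<in> {0<..1} \<Longrightarrow> \<exists>j. x \<in> {Ik_lo j..Ik_hi j}"
proof -
  assume x: "x \<in> {0<..1}"
  obtain m where m: "(1/2::real) ^ m < x" using real_arch_pow_inv[of x "1/2"] x by auto
  have "(1/2::real)^(m+1) \<le> (1/2)^m" by (rule power_decreasing) auto
  then have ex: "\<exists>n. (1/2::real) ^ (n + 1) \<le> x" using m by (intro exI[of _ m]) linarith
  define n where "n = (LEAST n. (1/2::real) ^ (n + 1) \<le> x)"
  have n1: "(1/2::real) ^ (n + 1) \<le> x" unfolding n_def using ex by (rule LeastI_ex)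
  have "x \<le> (1/2) ^ n"
  proof (cases n)
    case 0 then show ?thesis using x by simp
  next
    case (Suc k)
    have "\<not> (1/2::real) ^ (k + 1) \<le> x" using not_less_Least[of k "\<lambda>n. (1/2::real) ^ (n + 1) \<le> x"] Suc
      unfolding n_def by auto
    then show ?thesis using Suc by simp
  qed
  then show ?thesis using n1 by (auto simp: Ik_lo_def Ik_hi_def)
qed

lemma part1:
  fixes f :: "real \<Rightarrow> real"
  assumes fi: "f integrable_on {0..1}"
    and ap: "\<forall>e>0. \<exists>n (c :: nat \<Rightarrow> real).
                 alex_norm (\<lambda>x. f x - (\<Sum>k<n. c k * phiI (Ik_lo k) (Ik_hi k) x)) < e"
  shows "KJ f \<or> K_zero f"
proof (cases "KJ f")
  case False
  then have fa: "f absolutely_integrable_on {0..1}" using fi by (simp add: KJ_def)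
  have Fj: "integral {0..x} f = 0" if "x \<in> {Ik_lo j..Ik_hi j}" for j x
  proof -
    obtain d where d: "\<forall>x\<in>{Ik_lo j..Ik_hi j}. integral {0..x} f = d * PhiI (Ik_lo j) (Ik_hi j) x"
      using approx_coef[OF fi ap] by blast
    have "d = 0"
      by (rule var_zero[OF fa lo_hi less_imp_le[OF lo_pos] hi_le1]) (use d in auto)
    then show ?thesis using d that by simp
  qed
  have "integral {0..x} f = 0" if x01: "x \<in> {0..1}" for x
  proof (cases "x = 0")
    case True then show ?thesis by simp
  next
    case False
    then obtain j where "x \<in> {Ik_lo j..Ik_hi j}" using cover[of x] x01 False by auto
    then show ?thesis by (rule Fj)
  qed
  then show ?thesis using zero_ae[OF fi] by blast
qed simp



abbreviation SS :: "nat \<Rightarrow> (nat \<Rightarrow> real) \<Rightarrow> real \<Rightarrow> real" where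
  "SS n c x \<equiv> (\<Sum>k<n. c k * phiI (Ik_lo k) (Ik_hi k) x)"

lemma SS_extend: "n \<le> m \<Longrightarrow> SS n c x = SS m (\<lambda>k. if k < n then c k else 0) x"
proof (induction m rule: dec_induct)
  case base then show ?case by (intro sum.cong) auto
next
  case (step m) then show ?case by simp
qed

lemma SS_add: "SS p u x + SS q w x
   = SS (max p q) (\<lambda>k. (if k < p then u k else 0) + (if k < q then w k else 0)) x"
  using SS_extend[of p "max p q" u x] SS_extend[of q "max p q" w x]
  by (simp add: sum.distrib distrib_right)

lemma SS_scale: "a * SS n c x = SS n (\<lambda>k. a * c k) x"
  by (simp add: sum_distrib_left mult.assoc)

lemma alex_zero: "alex_norm (\<lambda>x. 0) \<le> 0"
  by (rule alex_le) simp

definition VV :: "(real \<Rightarrow> real) set" where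
  "VV = {f. f integrable_on {0..1} \<and> (\<forall>e>0. \<exists>n (c :: nat \<Rightarrow> real). alex_norm (\<lambda>x. f x - SS n c x) < e)}"

lemma VV_add:
  assumes "f \<in> VV" "g \<in> VV"
  shows "(\<lambda>x. f x + g x) \<in> VV"
proof -
  have fi: "f integrable_on {0..1}" "g integrable_on {0..1}" using assms by (auto simp: VV_def)
  have "\<exists>n c. alex_norm (\<lambda>x. (f x + g x) - SS n c x) < e" if e: "e > 0" for e
  proof -
    have a1: "\<forall>e>0. \<exists>n c. alex_norm (\<lambda>x. f x - SS n c x) < e" using assms(1) by (simp add: VV_def)
    have a2: "\<forall>e>0. \<exists>n c. alex_norm (\<lambda>x. g x - SS n c x) < e" using assms(2) by (simp add: VV_def)
    have e2: "e/2 > 0" using e by simp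
    obtain n1 c1 where 1: "alex_norm (\<lambda>x. f x - SS n1 c1 x) < e/2" using a1 e2 by blast
    obtain n2 c2 where 2: "alex_norm (\<lambda>x. g x - SS n2 c2 x) < e/2" using a2 e2 by blast
    let ?c = "\<lambda>k. (if k < n1 then c1 k else 0) + (if k < n2 then c2 k else 0)"
    have eq: "(\<lambda>x. (f x + g x) - SS (max n1 n2) ?c x) = (\<lambda>x. (f x - SS n1 c1 x) + (g x - SS n2 c2 x))"
    proof (rule ext)
      fix x show "(f x + g x) - SS (max n1 n2) ?c x = (f x - SS n1 c1 x) + (g x - SS n2 c2 x)"
        using SS_add[where p=n1 and u=c1 and x=x and q=n2 and w=c2] by linarith
    qed
    have "alex_norm (\<lambda>x. (f x - SS n1 c1 x) + (g x - SS n2 c2 x)) \<le> alex_norm (\<lambda>x. f x - SS n1 c1 x) + alex_norm (\<lambda>x. g x - SS n2 c2 x)"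
      by (rule alex_triangle) (auto intro!: integrable_diff fi sum_integrable01)
    then show ?thesis using 1 2 eq by (intro exI[of _ "max n1 n2"] exI[of _ ?c]) simp
  qed
  then show ?thesis using fi by (auto simp: VV_def intro: integrable_add)
qed

lemma VV_scale:
  assumes "f \<in> VV"
  shows "(\<lambda>x. a * f x) \<in> VV"
proof -
  have fi: "f integrable_on {0..1}" using assms by (auto simp: VV_def)
  have "\<exists>n c. alex_norm (\<lambda>x. a * f x - SS n c x) < e" if e: "e > 0" for e
  proof -
    have e': "e / (\<bar>a\<bar> + 1) > 0" using e by simp
    have a1: "\<forall>e>0. \<exists>n c. alex_norm (\<lambda>x. f x - SS n c x) < e" using assms(1) by (simp add: VV_def)
    obtain n c where 1: "alex_norm (\<lambda>x. f x - SS n c x) < e / (\<bar>a\<bar> + 1)" using a1 e' by blast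
    have eq: "(\<lambda>x. a * f x - SS n (\<lambda>k. a * c k) x) = (\<lambda>x. a * (f x - SS n c x))"
      by (rule ext) (simp add: SS_scale[symmetric] right_diff_distrib)
    have "alex_norm (\<lambda>x. a * (f x - SS n c x)) \<le> \<bar>a\<bar> * alex_norm (\<lambda>x. f x - SS n c x)"
      by (rule alex_scale) (auto intro!: integrable_diff fi sum_integrable01)
    also have "\<dots> \<le> \<bar>a\<bar> * (e / (\<bar>a\<bar> + 1))" using 1 by (intro mult_left_mono) auto
    also have "\<dots> < e" using e by (simp add: field_simps)
    finally show ?thesis using eq by (intro exI[of _ n] exI[of _ "\<lambda>k. a * c k"]) simp
  qed
  then show ?thesis using fi by (auto simp: VV_def intro: integrable_on_mult_right)
qed

lemma VV_closed:
  assumes fi: "f integrable_on {0..1}" and ap: "\<forall>e>0. \<exists>g\<in>VV. alex_norm (\<lambda>x. f x - g x) < e"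
  shows "f \<in> VV"
proof -
  have "\<exists>n c. alex_norm (\<lambda>x. f x - SS n c x) < e" if e: "e > 0" for e
  proof -
    have e2: "e/2 > 0" using e by simp
    obtain g where g: "g \<in> VV" "alex_norm (\<lambda>x. f x - g x) < e/2" using ap e2 by blast
    have gi: "g integrable_on {0..1}" using g by (auto simp: VV_def)
    have a1: "\<forall>e>0. \<exists>n c. alex_norm (\<lambda>x. g x - SS n c x) < e" using g(1) by (simp add: VV_def)
    have e2: "e/2 > 0" using e by simp
    obtain n c where 1: "alex_norm (\<lambda>x. g x - SS n c x) < e/2" using a1 e2 by blast
    have eq: "(\<lambda>x. f x - SS n c x) = (\<lambda>x. (f x - g x) + (g x - SS n c x))" by auto
    have "alex_norm (\<lambda>x. (f x - g x) + (g x - SS n c x)) \<le> alex_norm (\<lambda>x. f x - g x) + alex_norm (\<lambda>x. g x - SS n c x)"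
      by (rule alex_triangle) (auto intro!: integrable_diff fi gi sum_integrable01)
    then have "alex_norm (\<lambda>x. f x - SS n c x) < e" unfolding eq using 1 g(2) by linarith
    then show ?thesis by blast
  qed
  then show ?thesis using fi by (auto simp: VV_def)
qed

lemma phi_in_VV: "phiI (Ik_lo i) (Ik_hi i) \<in> VV"
proof -
  have eq: "SS (Suc i) (\<lambda>k. if k = i then 1 else 0) x = phiI (Ik_lo i) (Ik_hi i) x" for x
    by (simp add: if_distrib sum.delta cong: if_cong)
  have "phiI (Ik_lo i) (Ik_hi i) integrable_on {0..1}"
    using int_sum_integrable[where n="Suc i" and c="\<lambda>k. if k = i then 1 else 0" and x=1] eq by simp
  moreover have "\<exists>n c. alex_norm (\<lambda>x. phiI (Ik_lo i) (Ik_hi i) x - SS n c x) < e" if "e > 0" for e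
    using that alex_zero eq by (intro exI[of _ "Suc i"] exI[of _ "\<lambda>k. if k = i then 1 else 0"]) simp
  ultimately show ?thesis by (auto simp: VV_def)
qed

lemma indep:
  assumes "K_zero (\<lambda>x. \<Sum>i<n. c i * phiI (Ik_lo i) (Ik_hi i) x)" "i < n"
  shows "c i = 0"
proof -
  define t where "t = Ik_lo i + (Ik_hi i - Ik_lo i) * vpt 0"
  have lh: "Ik_lo i < Ik_hi i" by (rule lo_hi)
  have Pt: "PhiI (Ik_lo i) (Ik_hi i) t = -2/3" using lh by (simp add: PhiI_def t_def Phi_vpt)
  have tI: "t \<in> {Ik_lo i..Ik_hi i}"
  proof -
    have "(Ik_hi i - Ik_lo i) * vpt 0 \<le> (Ik_hi i - Ik_lo i) * 1" using vpt_le[of 0] lh by (intro mult_left_mono) auto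
    then have "(Ik_hi i - Ik_lo i) * vpt 0 \<le> Ik_hi i - Ik_lo i" by simp
    moreover have "0 \<le> (Ik_hi i - Ik_lo i) * vpt 0" using vpt_pos[of 0] lh by simp
    ultimately show ?thesis unfolding t_def atLeastAtMost_iff by (intro conjI) linarith+
  qed
  have t01: "t \<in> {0..1}" using tI lo_pos[of i] hi_le1[of i] by auto
  have "(\<Sum>k<n. c k * PhiI (Ik_lo k) (Ik_hi k) t) = 0"
    using has_integral_unique[OF int_sum[of t, where n=n and c=c] kzero_int[OF assms(1) t01]] t01 by simp
  then show ?thesis using sum_at[OF tI, where n=n and c=c] Pt assms(2) by simp
qed


theorem mainTheorem11:
  shows "(\<forall>f. f integrable_on {0..1} \<and>
              (\<forall>e>0. \<exists>n (c :: nat \<Rightarrow> real).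
                 alex_norm (\<lambda>x. f x - (\<Sum>k<n. c k * phiI (Ik_lo k) (Ik_hi k) x)) < e)
           \<longrightarrow> KJ f \<or> K_zero f)
         \<and> spaceable_K KJ"
proof
  show "\<forall>f. f integrable_on {0..1} \<and>
              (\<forall>e>0. \<exists>n (c :: nat \<Rightarrow> real).
                 alex_norm (\<lambda>x. f x - (\<Sum>k<n. c k * phiI (Ik_lo k) (Ik_hi k) x)) < e)
           \<longrightarrow> KJ f \<or> K_zero f"
    using part1 by blast
  have z: "(\<lambda>x. 0) \<in> VV"
  proof -
    have "\<exists>n c. alex_norm (\<lambda>x. (0::real) - SS n c x) < e" if "e > 0" for e
      using alex_zero that by (intro exI[of _ 0]) simp
    then show ?thesis by (auto simp: VV_def)
  qed
  have ind: "\<forall>n. \<exists>fs :: nat \<Rightarrow> real \<Rightarrow> real. (\<forall>i<n. fs i \<in> VV) \<and>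
            (\<forall>c :: nat \<Rightarrow> real. K_zero (\<lambda>x. \<Sum>i<n. c i * fs i x) \<longrightarrow> (\<forall>i<n. c i = 0))"
    using phi_in_VV indep by (intro allI exI[of _ "\<lambda>i. phiI (Ik_lo i) (Ik_hi i)"]) blast
  have p1: "\<forall>f\<in>VV. KJ f \<or> K_zero f"
    using part1 by (auto simp: VV_def)
  show "spaceable_K KJ"
    unfolding spaceable_K_def
    apply (rule exI[of _ VV])
    apply (intro conjI)
    using z VV_add VV_scale VV_closed ind p1 by (auto simp: VV_def)
qed

end
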